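(* The rolling sieve finds all primes up to a bound $n$ using $O(n\log\log n)$ arithmetic operations and $O(\sqrt{n}\log n)$ bits of space.
   Context: Model of computation: a RAM where, for input $n$, arithmetic operations on integers of $O(\log n)$ bits and other basic operations have unit cost, words have $O(\log n)$ bits, space is measured in bits, and the output list of primes is not counted against the space. The rolling sieve is the following algorithm. Its data structure is a circular array $T[0..\Delta-1]$ of stacks, each implemented as a linked list. Initialization with a starting value $\mathrm{start}$: set $r=\lfloor\sqrt{\mathrm{start}}\rfloor+1$, $s=r^2$, $\Delta=r+2$, all stacks empty; for each prime $p\le r-1$ push $p$ onto stack $T[(p-(\mathrm{start}\bmod p))\bmod p]$; set $\mathrm{pos}=0$, $m=\mathrm{start}$. The procedure next() does: set isPrime = true; while $T[\mathrm{pos}]$ is nonempty, pop $p$ from it, push $p$ onto $T[(\mathrm{pos}+p)\bmod\Delta]$, and set isPrime = false; then if $m=s$: if isPrime is true, push $r$ onto $T[(\mathrm{pos}+r)\bmod\Delta]$ and set isPrime = false; in any case set $r=r+1$, $s=r^2$; then set $m=m+1$, $\mathrm{pos}=(\mathrm{pos}+1)\bmod\Delta$, and if $\mathrm{pos}=0$ increase $\Delta$ by $2$ (appending two new empty stacks at the end of the array); return isPrime (which reports whether the old value of $m$ is prime). To find all primes up to $n$: output the primes up to $100$ directly, initialize with $\mathrm{start}=100$, and repeatedly call next(), outputting the current integer whenever next() returns true, until $n$ has been processed. *)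

theory Defs
  imports Complex_Main "HOL-Computational_Algebra.Primes"
    "HOL-Library.Discrete_Functions" "HOL-Library.Landau_Symbols"
begin

text \<open>State of the rolling sieve.  The circular array of stacks is a list of
  lists (head of a list = top of the stack); its length is Delta.\<close>

record rs_state =
  tab   :: "nat list list"
  pos   :: nat
  delta :: nat
  rr    :: nat
  ss    :: nat
  mm    :: nat

definition push :: "nat \<Rightarrow> nat \<Rightarrow> nat list list \<Rightarrow> nat list list" where
  "push p j T = T[j := p # T ! j]"

definition rs_init :: "nat \<Rightarrow> rs_state" where
  "rs_init start =
     (let r = floor_sqrt start + 1;
          ps = filter prime [0..<r];
          T0 = replicate (r + 2) [];
          T = fold (\<lambda>p T. push p ((p - start mod p) mod p) T) ps T0
      in \<lparr> tab = T, pos = 0, delta = r + 2, rr = r, ss = r\<^sup>2, mm = start \<rparr>)"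

text \<open>Cost (unit-cost operations) of initialization: allocate the array of
  Delta stacks, and push each prime below r.\<close>
definition rs_init_cost :: "nat \<Rightarrow> nat" where
  "rs_init_cost start =
     (let r = floor_sqrt start + 1 in (r + 2) + length (filter prime [0..<r]) + 1)"

definition rs_next :: "rs_state \<Rightarrow> bool \<times> rs_state" where
  "rs_next st =
     (let P = pos st; D = delta st; stack = tab st ! P;
          isP1 = (stack = []);
          T1 = fold (\<lambda>p T. push p ((P + p) mod D) T) stack ((tab st)[P := []]);
          (isP2, T2, r2) =
             (if mm st = ss st then
                (if isP1 then (False, push (rr st) ((P + rr st) mod D) T1, rr st + 1)
                 else (isP1, T1, rr st + 1))
              else (isP1, T1, rr st));
          P' = (P + 1) mod D;
          (D', T3) = (if P' = 0 then (D + 2, T2 @ [[], []]) else (D, T2))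
      in (isP2, \<lparr> tab = T3, pos = P', delta = D', rr = r2, ss = r2\<^sup>2, mm = mm st + 1 \<rparr>))"

text \<open>Unit-cost operations spent by one call of next(): a constant amount of
  work plus constant work per popped (and re-pushed) prime.\<close>
definition rs_next_cost :: "rs_state \<Rightarrow> nat" where
  "rs_next_cost st = 1 + length (tab st ! pos st)"

text \<open>Space in bits of a state: every word has O(log n) bits; the array has
  Delta words (stack heads), every linked-list node has two words (prime and
  pointer), and there are a constant number of scalar variables.\<close>
definition word_bits :: "nat \<Rightarrow> nat" where
  "word_bits n = floor_log n + 1"

definition rs_space :: "nat \<Rightarrow> rs_state \<Rightarrow> nat" where
  "rs_space n st = word_bits n *
      (length (tab st) + 2 * sum_list (map length (tab st)) + 7)"

definition rs_iter :: "nat \<Rightarrow> rs_state" where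
  "rs_iter k = ((snd \<circ> rs_next) ^^ k) (rs_init 100)"

text \<open>The full algorithm for bound n: output primes up to min n 100
  directly, then (if n \<ge> 100) initialize with start = 100 and call next()
  for m = 100, ..., n, i.e. n - 99 times; call number k processes 100 + k.\<close>
definition rs_output :: "nat \<Rightarrow> nat list" where
  "rs_output n =
     filter prime [0..<min n 100 + 1] @
     (if 100 \<le> n then [100 + k. k \<leftarrow> [0..<n - 99], fst (rs_next (rs_iter k))] else [])"

definition rs_ops :: "nat \<Rightarrow> nat" where
  "rs_ops n = (min n 100 + 1) +
     (if 100 \<le> n then rs_init_cost 100 + (\<Sum>k<n - 99. rs_next_cost (rs_iter k)) else 0)"

text \<open>Peak working space (output not counted) over the whole run.\<close>
definition rs_peak_space :: "nat \<Rightarrow> nat" where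
  "rs_peak_space n =
     (if 100 \<le> n then Max {rs_space n (rs_iter k) | k. k \<le> n - 99} else 0)"

end

theory Submission
  imports Defs "HOL-Real_Asymp.Real_Asymp"
begin


lemma prod_primes_dvd:
  fixes N :: nat
  assumes "finite A" "\<And>p. p \<in> A \<Longrightarrow> prime p \<and> p dvd N"
  shows "\<Prod>A dvd N"
  using assms
proof (induction A rule: finite_induct)
  case empty then show ?case by simp
next
  case (insert p A)
  have "coprime p (\<Prod>A)"
  proof (rule prod_coprime_right)
    fix q assume "q \<in> A"
    then have "prime q" "q \<noteq> p" using insert by auto
    then show "coprime p q" using insert by (simp add: primes_coprime)
  qed
  then show ?case using insert by (simp add: divides_mult)
qed

lemma prod_primes_between_le:
  fixes m :: nat
  shows "\<Prod>{p. prime p \<and> m < p \<and> p \<le> 2*m} \<le> 4^m"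
proof -
  let ?A = "{p. prime p \<and> m < p \<and> p \<le> 2*m}"
  have fin: "finite ?A" by (rule finite_subset[of _ "{..2*m}"]) auto
  have d1: "\<Prod>?A dvd fact (2*m)"
    by (rule prod_primes_dvd[OF fin]) (auto simp: dvd_fact)
  have eq: "fact m * fact m * (2*m choose m) = (fact (2*m) :: nat)"
    using binomial_fact_lemma[of m "2*m"] by simp
  have cop: "coprime (\<Prod>?A) (fact m * fact m :: nat)"
  proof (rule prod_coprime_left)
    fix p assume "p \<in> ?A"
    then have "prime p" "\<not> p dvd fact m" by (auto simp: prime_dvd_fact_iff)
    then have "coprime p (fact m :: nat)" by (simp add: prime_imp_coprime)
    then show "coprime p (fact m * fact m :: nat)" by simp
  qed
  have "\<Prod>?A dvd (2*m choose m)"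
    using d1 eq cop by (metis coprime_dvd_mult_right_iff mult.assoc)
  moreover have "(2*m choose m) > 0" by simp
  ultimately have "\<Prod>?A \<le> 2*m choose m" by (rule dvd_imp_le)
  also have "\<dots> \<le> 2^(2*m)" by (rule binomial_le_pow2)
  finally show ?thesis by (simp add: power_mult)
qed

lemma count_primes_dyadic:
  fixes j :: nat
  shows "j * card {p::nat. prime p \<and> 2^j < p \<and> p \<le> 2^(Suc j)} \<le> 2^(Suc j)"
proof -
  let ?A = "{p::nat. prime p \<and> 2^j < p \<and> p \<le> 2*2^j}"
  have fin: "finite ?A" by (rule finite_subset[of _ "{..2*2^j}"]) auto
  have "(2::nat)^(j * card ?A) = (\<Prod>p\<in>?A. 2^j)" by (simp add: power_mult)
  also have "\<dots> \<le> \<Prod>?A" by (rule prod_mono) auto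
  also have "\<dots> \<le> 4^(2^j)" by (rule prod_primes_between_le)
  also have "\<dots> = 2^(2^Suc j)" by (simp add: power_mult)
  finally have "j * card ?A \<le> 2^Suc j"
    using power_le_imp_le_exp by (metis one_less_numeral_iff semiring_norm(76))
  then show ?thesis by simp
qed

definition psum :: "nat \<Rightarrow> real" where
  "psum x = (\<Sum>p | prime p \<and> p \<le> x. 1 / real p)"

lemma block_sum:
  assumes "j \<ge> 1"
  shows "(\<Sum>p | prime p \<and> 2^j < p \<and> p \<le> 2^(Suc j). 1 / real p) \<le> 2 / real j"
proof -
  let ?A = "{p::nat. prime p \<and> 2^j < p \<and> p \<le> 2^(Suc j)}"
  have "(\<Sum>p\<in>?A. 1 / real p) \<le> (\<Sum>p\<in>?A. 1 / 2^j)"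
    by (rule sum_mono) (auto simp: field_simps)
  also have "\<dots> = real (card ?A) / 2^j" by simp
  also have "\<dots> \<le> 2 / real j"
  proof -
    have "real j * real (card ?A) \<le> 2 * 2^j"
      using count_primes_dyadic[of j] by (metis of_nat_le_iff of_nat_mult of_nat_numeral of_nat_power power_Suc)
    then show ?thesis using assms by (simp add: field_simps)
  qed
  finally show ?thesis .
qed

lemma psum_pow2:
  "psum (2^Suc J) \<le> 1/2 + 2 * (\<Sum>j=1..J. 1 / real j)"
proof (induction J)
  case 0
  have "{p::nat. prime p \<and> p \<le> 2} = {2}"
    using prime_ge_2_nat by (auto simp: le_antisym)
  then show ?case by (simp add: psum_def)
next
  case (Suc J)
  let ?B = "{p::nat. prime p \<and> p \<le> 2^Suc J}"
  let ?C = "{p::nat. prime p \<and> 2^Suc J < p \<and> p \<le> 2^(Suc (Suc J))}"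
  have "{p::nat. prime p \<and> p \<le> 2^Suc (Suc J)} = ?B \<union> ?C" by auto
  moreover have "finite ?B" "finite ?C" by auto
  moreover have "?B \<inter> ?C = {}" by auto
  ultimately have "psum (2^Suc (Suc J)) = psum (2^Suc J) + (\<Sum>p\<in>?C. 1 / real p)"
    unfolding psum_def by (simp add: sum.union_disjoint)
  also have "\<dots> \<le> 1/2 + 2 * (\<Sum>j=1..J. 1 / real j) + 2 / real (Suc J)"
    using Suc block_sum[of "Suc J"] by linarith
  also have "\<dots> = 1/2 + 2 * (\<Sum>j=1..Suc J. 1 / real j)"
    by (simp add: algebra_simps)
  finally show ?case .
qed

lemma harm_le_ln: "J \<ge> 1 \<Longrightarrow> (\<Sum>j=1..J. 1 / real j) \<le> 1 + ln (real J)"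
proof (induction J rule: dec_induct)
  case base then show ?case by simp
next
  case (step J)
  have "ln (real J / real (Suc J)) \<le> real J / real (Suc J) - 1"
    by (rule ln_le_minus_one) (use step in auto)
  moreover have "ln (real J / real (Suc J)) = ln (real J) - ln (real (Suc J))"
    using step by (simp add: ln_div)
  moreover have "real J / real (Suc J) - 1 = - (1 / real (Suc J))"
    by (simp add: field_simps)
  ultimately have "1 / real (Suc J) \<le> ln (real (Suc J)) - ln (real J)" by linarith
  then show ?case using step by simp
qed

lemma psum_mono: "x \<le> y \<Longrightarrow> psum x \<le> psum y"
  unfolding psum_def by (rule sum_mono2) auto

lemma psum_bound:
  assumes "n \<ge> 2"
  shows "psum n \<le> 5/2 + 2 * ln (log 2 (real n))"
proof -
  define J where "J = floor_log n"
  have J1: "J \<ge> 1" using assms floor_log_le_iff[of 2 n] floor_log_power[of 1] by (simp add: J_def)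
  have "n \<le> 2 ^ Suc J" using floor_log_exp2_gt[of n] by (simp add: J_def)
  then have "psum n \<le> psum (2^Suc J)" by (rule psum_mono)
  also have "\<dots> \<le> 1/2 + 2 * (1 + ln (real J))"
  proof -
    have "2 * (\<Sum>j=1..J. 1 / real j) \<le> 2 * (1 + ln (real J))"
      using harm_le_ln[OF J1] by (intro mult_left_mono) auto
    then show ?thesis using psum_pow2[of J] by linarith
  qed
  also have "ln (real J) \<le> ln (log 2 (real n))"
  proof -
    have "2 ^ J \<le> n" using floor_log_exp2_le[of n] assms by (simp add: J_def)
    then have "real (2^J) \<le> real n" by linarith
    then have "log 2 (2 ^ J) \<le> log 2 (real n)"
      using assms by (subst log_le_cancel_iff) auto
    then have "real J \<le> log 2 (real n)" by simp
    then show ?thesis using J1 by simp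
  qed
  finally show ?thesis by simp
qed



lemma fold_push_len: "length (fold (\<lambda>p T. push p (f p) T) xs T) = length T"
  by (induction xs arbitrary: T) (auto simp: push_def)

lemma fold_push_nth_set:
  "(\<forall>p\<in>set xs. f p < length T) \<Longrightarrow> j < length T \<Longrightarrow>
   set (fold (\<lambda>p T. push p (f p) T) xs T ! j) = set (T ! j) \<union> {p \<in> set xs. f p = j}"
proof (induction xs arbitrary: T)
  case Nil then show ?case by simp
next
  case (Cons a xs)
  have "set (fold (\<lambda>p T. push p (f p) T) xs (push a (f a) T) ! j)
        = set (push a (f a) T ! j) \<union> {p \<in> set xs. f p = j}"
    using Cons by (intro Cons.IH) (auto simp: push_def)
  then show ?case using Cons.prems by (auto simp: push_def nth_list_update)
qed

lemma mset_concat_update: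
  "j < length T \<Longrightarrow> mset (concat (T[j:=x])) + mset (T!j) = mset (concat T) + mset x"
proof (induction T arbitrary: j)
  case Nil then show ?case by simp
next
  case (Cons a T)
  then show ?case by (cases j) auto
qed

lemma fold_push_mset:
  "(\<forall>p\<in>set xs. f p < length T) \<Longrightarrow>
   mset (concat (fold (\<lambda>p T. push p (f p) T) xs T)) = mset (concat T) + mset xs"
proof (induction xs arbitrary: T)
  case Nil then show ?case by simp
next
  case (Cons a xs)
  have "mset (concat (fold (\<lambda>p T. push p (f p) T) xs (push a (f a) T))) =
        mset (concat (push a (f a) T)) + mset xs"
    using Cons by (intro Cons.IH) (auto simp: push_def)
  moreover have "mset (concat (push a (f a) T)) = mset (concat T) + {#a#}"
    using mset_concat_update[of "f a" T "a # T ! f a"] Cons.prems by (simp add: push_def)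
  ultimately show ?case by simp
qed

lemma rs_next_explicit:
 "rs_next st = (tab st ! pos st = [] \<and> mm st \<noteq> ss st,
   \<lparr>tab = (let T1 = fold (\<lambda>p T. push p ((pos st + p) mod delta st) T) (tab st ! pos st) ((tab st)[pos st := []]);
              T2 = (if mm st = ss st \<and> tab st ! pos st = [] then push (rr st) ((pos st + rr st) mod delta st) T1 else T1)
           in if Suc (pos st) mod delta st = 0 then T2 @ [[],[]] else T2),
    pos = Suc (pos st) mod delta st,
    delta = (if Suc (pos st) mod delta st = 0 then delta st + 2 else delta st),
    rr = (if mm st = ss st then rr st + 1 else rr st),
    ss = (if mm st = ss st then rr st + 1 else rr st)^2,
    mm = mm st + 1\<rparr>)"
  unfolding rs_next_def Let_def by auto



lemma small_primes: "prime (3::nat)" "prime (5::nat)" "prime (7::nat)"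
  "\<not> prime (4::nat)" "\<not> prime (6::nat)" "\<not> prime (8::nat)" "\<not> prime (9::nat)" "\<not> prime (10::nat)"
  by (simp_all add: prime_nat_iff' atLeastLessThan_upt upt_rec)

lemma upt11: "[0..<11::nat] = [0,1,2,3,4,5,6,7,8,9,10]"
  by (simp add: upt_rec)

lemma filt: "filter prime [0..<11::nat] = [2,3,5,7]"
  by (simp add: upt11 small_primes)

lemma primes_lt_11: "{p::nat. prime p \<and> p < 11} = {2,3,5,7}"
proof -
  have "{p::nat. prime p \<and> p < 11} = set (filter prime [0..<11])" by auto
  then show ?thesis by (simp add: filt)
qed

lemma init100: "rs_init 100 = \<lparr>tab = [[5,2],[],[3],[],[],[7],[],[],[],[],[],[],[]], pos = 0, delta = 13, rr = 11, ss = 121, mm = 100\<rparr>"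
proof -
  have "floor_sqrt 100 = 10" using floor_sqrt_inverse_power2[of 10] by simp
  moreover have "replicate 13 [] = [[],[],[],[],[],[],[],[],[],[],[],[],[]::nat list]"
    by (simp add: numeral_eq_Suc)
  ultimately show ?thesis unfolding rs_init_def Let_def by (simp add: filt push_def)
qed


lemma modD: "x < (D::nat) \<Longrightarrow> (x + D) mod D = x" by simp

lemma modD': "x < (D::nat) \<Longrightarrow> y = x + D \<Longrightarrow> y mod D = x" by simp

lemma V1:
  fixes D P j :: nat
  assumes "P < D" "j < D" "j \<noteq> P"
  defines "P' \<equiv> Suc P mod D" and "D' \<equiv> (if Suc P mod D = 0 then D + 2 else D)"
  shows "1 + (j + D' - P') mod D' = (j + D - P) mod D"
proof (cases "Suc P = D")
  case True
  then have "P' = 0" "D' = D + 2" by (auto simp: P'_def D'_def)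
  moreover have "(j + (D+2)) mod (D+2) = j"
    using assms(2) by (simp only: mod_add_self2) simp
  moreover have "(j + D - P) mod D = j + 1" using True assms by simp
  ultimately show ?thesis by simp
next
  case False
  then have SP: "Suc P < D" using assms by simp
  then have "P' = Suc P" "D' = D" by (auto simp: P'_def D'_def)
  moreover have "1 + (j + D - Suc P) mod D = (j + D - P) mod D"
  proof (cases "j > P")
    case True
    have "(j + D - Suc P) mod D = j - Suc P" by (rule modD') (use True assms in auto)
    moreover have "(j + D - P) mod D = j - P" by (rule modD') (use True assms in auto)
    ultimately show ?thesis using True by simp
  next
    case False
    then have "j < P" using assms by simp
    then show ?thesis using assms by simp
  qed
  ultimately show ?thesis by simp
qed

lemma V2:
  fixes D P p :: nat
  assumes "P < D" "1 \<le> p" "p \<le> D"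
  defines "P' \<equiv> Suc P mod D" and "D' \<equiv> (if Suc P mod D = 0 then D + 2 else D)"
  shows "1 + ((P + p) mod D + D' - P') mod D' = p"
proof (cases "Suc P = D")
  case True
  then have "P' = 0" "D' = D + 2" by (auto simp: P'_def D'_def)
  moreover have "(P + p) mod D = p - 1"
  proof -
    have "P + p = (p - 1) + D" using True assms by simp
    then have "(P + p) mod D = (p - 1) mod D" by (simp only: mod_add_self2)
    then show ?thesis using assms by simp
  qed
  moreover have "(p - 1 + (D+2)) mod (D+2) = p - 1"
    using assms by (simp only: mod_add_self2) simp
  ultimately show ?thesis using assms by simp
next
  case False
  then have SP: "Suc P < D" using assms by simp
  then have PD: "P' = Suc P" "D' = D" by (auto simp: P'_def D'_def)
  show ?thesis
  proof (cases "P + p < D")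
    case True
    then have "(P + p) mod D + D - Suc P = (p - 1) + D" using assms by simp
    then have "((P + p) mod D + D - Suc P) mod D = p - 1" by (intro modD') (use assms in auto)
    then show ?thesis using PD assms True by simp
  next
    case False
    then have "(P + p) mod D = P + p - D"
      using assms by (simp add: le_mod_geq)
    then have "(P + p) mod D + D - Suc P = p - 1" using assms False by simp
    then show ?thesis using PD assms by simp
  qed
qed



definition val :: "rs_state \<Rightarrow> nat \<Rightarrow> nat" where
  "val st j = mm st + (j + delta st - pos st) mod delta st"

definition rsinv :: "rs_state \<Rightarrow> bool" where
 "rsinv st \<longleftrightarrow> length (tab st) = delta st \<and> pos st < delta st \<and> 13 \<le> delta st \<and>
    4 * mm st = (delta st - 1)^2 + 4 * pos st + 256 \<and>
    ss st = (rr st)^2 \<and> (rr st - 1)^2 \<le> mm st \<and> mm st \<le> (rr st)^2 \<and>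
    mset (concat (tab st)) = mset_set {p. prime p \<and> p < rr st} \<and>
    (\<forall>j<delta st. \<forall>p\<in>set (tab st ! j). p dvd val st j \<and> val st j < mm st + p)"

lemma mset_distinct: "mset xs = mset_set A \<Longrightarrow> finite A \<Longrightarrow> distinct xs"
proof -
  assume h: "mset xs = mset_set A" "finite A"
  then have "set xs = A" by (metis finite_set_mset_mset_set set_mset_mset)
  moreover have "length xs = card A" using h by (metis size_mset size_mset_set)
  ultimately show ?thesis by (simp add: card_distinct)
qed

lemma small_prime_factor:
  fixes m :: nat
  assumes "\<not> prime m" "m \<ge> 2"
  shows "\<exists>q. prime q \<and> q dvd m \<and> q^2 \<le> m"
proof -
  obtain a where a: "a dvd m" "a \<noteq> 1" "a \<noteq> m"
    using assms by (auto simp: prime_nat_iff)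
  obtain b where b: "m = a * b" using a by (auto elim: dvdE)
  have "a \<ge> 2" using a assms b by (cases a) auto
  have "b \<ge> 2" using a assms b by (cases b; cases "b = 1") auto
  define c where "c = min a b"
  have c2: "c \<ge> 2" using \<open>a \<ge> 2\<close> \<open>b \<ge> 2\<close> by (simp add: c_def)
  have "c * c \<le> a * b" by (simp add: c_def mult_mono)
  then have cm: "c^2 \<le> m" using b by (simp add: power2_eq_square)
  have cd: "c dvd m" using b by (auto simp: c_def min_def)
  obtain q where q: "prime q" "q dvd c" using c2 prime_factor_nat[of c] by auto
  have "q \<le> c" using q c2 by (simp add: dvd_imp_le)
  then have "q^2 \<le> c^2" by (simp add: power_mono)
  then show ?thesis using q cd cm dvd_trans by (metis le_trans)
qed

lemma init_inv: "rsinv (rs_init 100)"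
proof -
  have m: "mset (concat [[5,2],[],[3],[],[],[7],[],[],[],[],[],[],[]]) = mset_set {p::nat. prime p \<and> p < 11}"
    by (simp add: primes_lt_11)
  have u: "[0..<13::nat] = [0,1,2,3,4,5,6,7,8,9,10,11,12]" by (simp add: upt_rec)
  have "\<forall>j<13. \<forall>p\<in>set ([[5,2],[],[3],[],[],[7],[],[],[],[],[],[],[]] ! j).
           p dvd (100 + (j + 13 - 0) mod 13) \<and> 100 + (j + 13 - 0) mod 13 < 100 + (p::nat)"
  proof (intro allI impI)
    fix j :: nat assume "j < 13"
    then have "j \<in> set [0..<13]" by simp
    then show "\<forall>p\<in>set ([[5,2],[],[3],[],[],[7],[],[],[],[],[],[],[]] ! j).
           p dvd (100 + (j + 13 - 0) mod 13) \<and> 100 + (j + 13 - 0) mod 13 < 100 + (p::nat)"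
      unfolding u by auto
  qed
  then show ?thesis unfolding init100 rsinv_def val_def using m by simp
qed



lemma val_eq_m_iff:
  fixes j D P :: nat
  assumes "j < D" "P < D"
  shows "(j + D - P) mod D = 0 \<longleftrightarrow> j = P"
proof
  assume h: "(j + D - P) mod D = 0"
  show "j = P"
  proof (rule ccontr)
    assume "j \<noteq> P"
    show False
    proof (cases "j > P")
      case True
      have "(j + D - P) mod D = j - P" by (rule modD') (use assms True in auto)
      then show False using h True by simp
    next
      case False
      then have "(j + D - P) mod D = j + D - P" using assms \<open>j \<noteq> P\<close> by simp
      then show False using h assms by simp
    qed
  qed
qed simp

lemma inv_facts:
  assumes I: "rsinv st"
  shows "mm st \<ge> 100" "rr st \<le> delta st" "rr st \<ge> 2" "rr st \<le> mm st"
    "set (tab st ! pos st) = {p. prime p \<and> p < rr st \<and> p dvd mm st}"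
    "distinct (tab st ! pos st)"
    "set (concat (tab st)) = {p. prime p \<and> p < rr st}"
proof -
  define D where "D = delta st"
  define P where "P = pos st"
  define m where "m = mm st"
  define r where "r = rr st"
  define T where "T = tab st"
  note defs = D_def P_def m_def r_def T_def
  have len: "length T = D" and PD: "P < D" and D13: "13 \<le> D"
    and eq4: "4 * m = (D - 1)^2 + 4 * P + 256"
    and r1: "(r - 1)^2 \<le> m" and r2: "m \<le> r^2"
    and ms: "mset (concat T) = mset_set {p. prime p \<and> p < r}"
    and pos: "\<forall>j<D. \<forall>p\<in>set (T ! j). p dvd val st j \<and> val st j < m + p"
    using I unfolding rsinv_def defs by auto
  obtain x where x: "D = Suc x" "x \<ge> 12" using D13 by (cases D) auto
  have x2: "x^2 \<ge> 144" using power_mono[of 12 x 2] x by simp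
  show m100: "mm st \<ge> 100" using eq4 x x2 by (simp add: m_def)
  show rD: "rr st \<le> delta st"
  proof (rule ccontr)
    assume "\<not> rr st \<le> delta st"
    then have "D \<le> r - 1" by (simp add: defs)
    then have "D^2 \<le> (r-1)^2" by (simp add: power_mono)
    then have "D^2 \<le> m" using r1 by linarith
    moreover have "D^2 = x^2 + 2*x + 1" using x by (simp add: power2_eq_square)
    ultimately show False using eq4 x x2 PD by simp
  qed
  show r2': "rr st \<ge> 2"
  proof (rule ccontr)
    assume "\<not> rr st \<ge> 2"
    then have "r \<le> 1" by (simp add: defs)
    then have "r = 0 \<or> r = 1" by auto
    then have "r^2 \<le> 1" by auto
    then show False using r2 m100 by (simp add: defs)
  qed
  show rm: "rr st \<le> mm st"
  proof (rule ccontr)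
    assume "\<not> rr st \<le> mm st"
    then have "m \<le> r - 1" by (simp add: defs)
    then have "m^2 \<le> (r-1)^2" by (simp add: power_mono)
    then have "m^2 \<le> m" using r1 by linarith
    then have "m * m \<le> m" by (simp add: power2_eq_square)
    then show False using m100 by (simp add: defs)
  qed
  have fin: "finite {p. prime p \<and> p < r}" by auto
  have setc: "set (concat T) = {p. prime p \<and> p < r}"
    using ms fin by (metis finite_set_mset_mset_set set_mset_mset)
  then show "set (concat (tab st)) = {p. prime p \<and> p < rr st}" by (simp add: defs)
  have dc: "distinct (concat T)" using ms fin by (rule mset_distinct)
  have TP: "T ! P \<in> set T" using len PD by simp
  show "distinct (tab st ! pos st)"
    using dc TP by (simp add: distinct_concat_iff defs)
  have valP: "val st P = m" by (simp add: val_def defs)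
  show "set (tab st ! pos st) = {p. prime p \<and> p < rr st \<and> p dvd mm st}"
  proof -
    have "set (T ! P) = {p. prime p \<and> p < r \<and> p dvd m}"
    proof
      show "set (T ! P) \<subseteq> {p. prime p \<and> p < r \<and> p dvd m}"
        using pos PD valP setc TP by auto
      show "{p. prime p \<and> p < r \<and> p dvd m} \<subseteq> set (T ! P)"
      proof
        fix p assume p: "p \<in> {p. prime p \<and> p < r \<and> p dvd m}"
        then have "p \<in> set (concat T)" using setc by simp
        then obtain ys where "ys \<in> set T" "p \<in> set ys" by auto
        then obtain j where j: "j < D" "p \<in> set (T ! j)" using len
          by (metis in_set_conv_nth)
        then have pj: "p dvd val st j" "val st j < m + p" using pos by auto
        have "val st j = m"
        proof -
          have "p dvd val st j - m" using pj p by (simp add: dvd_diff_nat)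
          moreover have "val st j - m < p" using pj by (simp add: val_def defs)
          moreover have "p > 0" using p prime_gt_0_nat by auto
          ultimately have "val st j - m = 0" using dvd_imp_le by (metis not_less zero_less_iff_neq_zero)
          moreover have "val st j \<ge> m" by (simp add: val_def defs)
          ultimately show ?thesis by simp
        qed
        then have "(j + D - P) mod D = 0" by (simp add: val_def defs)
        then have "j = P" using val_eq_m_iff[OF j(1) PD] by simp
        then show "p \<in> set (T ! P)" using j by simp
      qed
    qed
    then show ?thesis by (simp add: defs)
  qed
qed



lemma not_prime_sq: "r \<ge> 2 \<Longrightarrow> \<not> prime ((r::nat)^2)"
proof
  assume "2 \<le> r" "prime (r^2)"
  then have "r = 1 \<or> r = 1" using prime_product[of r r] by (simp add: power2_eq_square)
  then show False using \<open>2 \<le> r\<close> by simp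
qed

lemma step_out:
  assumes I: "rsinv st"
  shows "fst (rs_next st) = prime (mm st)"
proof -
  note F = inv_facts[OF I]
  have ss: "ss st = (rr st)^2" "mm st \<le> (rr st)^2" using I by (auto simp: rsinv_def)
  have fst_eq: "fst (rs_next st) = (tab st ! pos st = [] \<and> mm st \<noteq> ss st)"
    by (simp add: rs_next_explicit)
  show ?thesis
  proof (cases "mm st = ss st")
    case True
    then show ?thesis using fst_eq ss F(3) not_prime_sq by auto
  next
    case False
    then have lt: "mm st < (rr st)^2" using ss by simp
    show ?thesis
    proof (cases "prime (mm st)")
      case True
      have "tab st ! pos st = []"
      proof -
        have "\<not> (prime p \<and> p < rr st \<and> p dvd mm st)" for p
        proof
          assume p: "prime p \<and> p < rr st \<and> p dvd mm st"
          then have "p = mm st" using True by (metis prime_nat_iff prime_gt_1_nat less_irrefl)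
          then show False using p F(4) by simp
        qed
        then have "set (tab st ! pos st) = {}" using F(5) by auto
        then show ?thesis by simp
      qed
      then show ?thesis using fst_eq False True by simp
    next
      case np: False
      obtain q where q: "prime q" "q dvd mm st" "q^2 \<le> mm st"
        using small_prime_factor[OF np] F(1) by auto
      have "q < rr st"
      proof (rule ccontr)
        assume "\<not> q < rr st"
        then have "(rr st)^2 \<le> q^2" by (simp add: power_mono)
        then show False using q lt by linarith
      qed
      then have "q \<in> set (tab st ! pos st)" using F(5) q by simp
      then have "tab st ! pos st \<noteq> []" by auto
      then show ?thesis using fst_eq np by simp
    qed
  qed
qed

lemma step_cost:
  assumes I: "rsinv st"
  shows "length (tab st ! pos st) = card {p. prime p \<and> p < rr st \<and> p dvd mm st}"
  using inv_facts(5,6)[OF I] distinct_card by metis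



lemma prime_lt_Suc_set:
  "{p::nat. prime p \<and> p < Suc r} = {p. prime p \<and> p < r} \<union> (if prime r then {r} else {})"
  by (auto simp: less_Suc_eq)

lemma step_inv:
  assumes I: "rsinv st"
  shows "rsinv (snd (rs_next st))"
proof -
  note F = inv_facts[OF I]
  define D where "D = delta st"
  define P where "P = pos st"
  define m where "m = mm st"
  define r where "r = rr st"
  define T where "T = tab st"
  note defs = D_def P_def m_def r_def T_def
  have len: "length T = D" and PD: "P < D" and D13: "13 \<le> D"
    and eq4: "4 * m = (D - 1)^2 + 4 * P + 256" and ss: "ss st = r^2"
    and r1: "(r - 1)^2 \<le> m" and r2: "m \<le> r^2"
    and ms: "mset (concat T) = mset_set {p. prime p \<and> p < r}"
    and pos: "\<forall>j<D. \<forall>p\<in>set (T ! j). p dvd val st j \<and> val st j < m + p"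
    using I unfolding rsinv_def defs by auto
  have rD: "r \<le> D" and rge2: "r \<ge> 2" using F by (auto simp: defs)
  define S where "S = T ! P"
  have Sset: "set S = {p. prime p \<and> p < r \<and> p dvd m}" using F(5) by (simp add: S_def defs)
  have Sb: "\<forall>p\<in>set S. 1 \<le> p \<and> p \<le> D"
  proof
    fix p assume "p \<in> set S"
    then have "prime p" "p < r" using Sset by auto
    then show "1 \<le> p \<and> p \<le> D" using rD prime_ge_2_nat[of p] by simp
  qed
  define T1 where "T1 = fold (\<lambda>p T. push p ((P + p) mod D) T) S (T[P := []])"
  define pr where "pr = (m = r^2 \<and> S = [])"
  define T2 where "T2 = (if pr then push r ((P + r) mod D) T1 else T1)"
  define wrap where "wrap = (Suc P mod D = 0)"
  define P' where "P' = Suc P mod D"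
  define D' where "D' = (if wrap then D + 2 else D)"
  define T3 where "T3 = (if wrap then T2 @ [[],[]] else T2)"
  define r' where "r' = (if m = r^2 then r + 1 else r)"
  have st': "snd (rs_next st) = \<lparr>tab = T3, pos = P', delta = D', rr = r', ss = r'^2, mm = m + 1\<rparr>"
    unfolding rs_next_explicit Let_def T3_def T2_def T1_def pr_def wrap_def P'_def D'_def r'_def S_def
    by (simp add: defs ss)
  have Dpos: "D > 0" using D13 by simp
  have lenT1: "length T1 = D" unfolding T1_def by (simp add: fold_push_len len)
  have lenT2: "length T2 = D" unfolding T2_def by (simp add: lenT1 push_def)
  have lenT3: "length T3 = D'" unfolding T3_def D'_def by (simp add: lenT2)
  have bnd: "\<forall>p\<in>set S. (P + p) mod D < length (T[P := []])" using Dpos len by simp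
  have msT1: "mset (concat T1) = mset (concat T)"
  proof -
    have "mset (concat T1) = mset (concat (T[P := []])) + mset S"
      unfolding T1_def by (rule fold_push_mset[OF bnd])
    also have "\<dots> = mset (concat T)"
      using mset_concat_update[of P T "[]"] PD len by (simp add: S_def)
    finally show ?thesis .
  qed
  have msT2: "mset (concat T2) = mset (concat T1) + (if pr then {#r#} else {#})"
    using mset_concat_update[of "(P + r) mod D" T1 "r # T1 ! ((P + r) mod D)"] lenT1 Dpos
    by (auto simp: T2_def push_def)
  have msT3: "mset (concat T3) = mset (concat T2)" by (simp add: T3_def)
  have pr_iff: "m = r^2 \<Longrightarrow> (S = [] \<longleftrightarrow> prime r)"
  proof -
    assume mr: "m = r^2"
    show ?thesis
    proof
      assume "S = []"
      show "prime r"
      proof (rule ccontr)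
        assume "\<not> prime r"
        then obtain q where q: "prime q" "q dvd r" "q^2 \<le> r"
          using small_prime_factor rge2 by blast
        have "q < r"
        proof -
          have "q \<le> q^2" by (simp add: power2_eq_square)
          moreover have "q \<noteq> r" using q \<open>\<not> prime r\<close> by auto
          ultimately show ?thesis using q by simp
        qed
        moreover have "q dvd m" using q mr by (simp add: power2_eq_square)
        ultimately have "q \<in> set S" using Sset q by simp
        then show False using \<open>S = []\<close> by simp
      qed
    next
      assume pr: "prime r"
      have "set S = {}"
      proof -
        have "\<not> (prime q \<and> q < r \<and> q dvd m)" for q
        proof
          assume q: "prime q \<and> q < r \<and> q dvd m"
          then have "q dvd r * r" using mr by (simp add: power2_eq_square)
          then have "q dvd r" using q prime_dvd_mult_iff by blast
          then have "q = r" using pr q by (metis prime_nat_iff prime_gt_1_nat less_irrefl)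
          then show False using q by simp
        qed
        then show ?thesis using Sset by auto
      qed
      then show "S = []" by simp
    qed
  qed
  have newset: "mset_set {p. prime p \<and> p < r'} = mset_set {p. prime p \<and> p < r} + (if pr then {#r#} else {#})"
  proof (cases "m = r^2")
    case True
    then have "r' = Suc r" by (simp add: r'_def)
    then have "{p. prime p \<and> p < r'} = {p. prime p \<and> p < r} \<union> (if prime r then {r} else {})"
      by (simp add: prime_lt_Suc_set)
    moreover have "pr = prime r" using pr_iff True by (simp add: pr_def)
    ultimately show ?thesis by (auto simp: mset_set.insert)
  next
    case False
    then show ?thesis by (simp add: r'_def pr_def)
  qed
  have setT1: "set (T1 ! j) = (if j = P then {} else set (T ! j)) \<union> {p\<in>set S. (P + p) mod D = j}"
    if "j < D" for j
    unfolding T1_def using fold_push_nth_set[OF bnd] that len by (simp add: nth_list_update)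
  have setT2: "set (T2 ! j) = set (T1 ! j) \<union> (if pr \<and> (P + r) mod D = j then {r} else {})"
    if "j < D" for j
    using that lenT1 by (auto simp: T2_def push_def nth_list_update)
  have T3a: "T3 ! j = T2 ! j" if "j < D" for j
    using that lenT2 by (simp add: T3_def nth_append)
  have T3b: "T3 ! j = []" if "D \<le> j" "j < D'" for j
  proof -
    have w: "wrap" using that by (auto simp: D'_def split: if_splits)
    have "j - D = 0 \<or> j - D = 1" using that w by (auto simp: D'_def)
    then show ?thesis using that w lenT2 by (auto simp: T3_def nth_append)
  qed
  have posok: "\<forall>j<D'. \<forall>p\<in>set (T3 ! j). p dvd (m + 1 + (j + D' - P') mod D') \<and> m + 1 + (j + D' - P') mod D' < m + 1 + p"
  proof (intro allI impI ballI)
    fix j p assume j: "j < D'" and p: "p \<in> set (T3 ! j)"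
    have jD: "j < D" using T3b[of j] j p by (cases "j < D") auto
    then have "p \<in> set (T2 ! j)" using p T3a by simp
    then have cases: "(j \<noteq> P \<and> p \<in> set (T ! j)) \<or> (p \<in> set S \<and> (P + p) mod D = j) \<or> (pr \<and> p = r \<and> (P + r) mod D = j)"
      using setT1[OF jD] setT2[OF jD] by (auto split: if_splits)
    show "p dvd (m + 1 + (j + D' - P') mod D') \<and> m + 1 + (j + D' - P') mod D' < m + 1 + p"
    proof -
      { assume c: "j \<noteq> P \<and> p \<in> set (T ! j)"
        have "1 + (j + D' - P') mod D' = (j + D - P) mod D"
          using V1[OF PD jD] c unfolding D'_def P'_def wrap_def by simp
        then have "m + 1 + (j + D' - P') mod D' = val st j" by (simp add: val_def defs)
        moreover have "p dvd val st j" "val st j < m + p" using pos jD c by auto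
        ultimately have ?thesis by simp }
      moreover
      { assume c: "p \<in> set S \<and> (P + p) mod D = j"
        have "1 + (j + D' - P') mod D' = p"
          using V2[OF PD, of p] Sb c unfolding D'_def P'_def wrap_def by simp
        then have e: "m + 1 + (j + D' - P') mod D' = m + p" by simp
        have "p dvd m" using c Sset by simp
        then have ?thesis unfolding e by simp }
      moreover
      { assume c: "pr \<and> p = r \<and> (P + r) mod D = j"
        have "1 + (j + D' - P') mod D' = r"
          using V2[OF PD, of r] rD rge2 c unfolding D'_def P'_def wrap_def by simp
        then have e: "m + 1 + (j + D' - P') mod D' = m + r" by simp
        have "m = r^2" using c by (simp add: pr_def)
        then have ?thesis unfolding e using c rge2 by (simp add: power2_eq_square) }
      ultimately show ?thesis using cases by blast
    qed
  qed
  have wrap_iff: "wrap = (Suc P = D)"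
  proof (cases "Suc P = D")
    case True then show ?thesis by (simp add: wrap_def)
  next
    case False then have "Suc P < D" using PD by simp
    then show ?thesis by (simp add: wrap_def)
  qed
  obtain x where x: "D = Suc x" using Dpos by (cases D) auto
  have eq4': "4 * (m + 1) = (D' - 1)^2 + 4 * P' + 256"
  proof (cases wrap)
    case True
    then have "P = x" "P' = 0" "D' = Suc (Suc (Suc x))" using wrap_iff x by (auto simp: P'_def D'_def)
    moreover have "(Suc (Suc x))^2 = x^2 + 4 * x + 4" by (simp add: power2_eq_square)
    ultimately show ?thesis using eq4 x by simp
  next
    case False
    then have "P' = Suc P" "D' = D" using wrap_iff PD by (auto simp: P'_def D'_def)
    then show ?thesis using eq4 by simp
  qed
  have rr': "(r' - 1)^2 \<le> m + 1 \<and> m + 1 \<le> r'^2"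
  proof (cases "m = r^2")
    case True
    then have "r' = r + 1" by (simp add: r'_def)
    moreover have "(r + 1)^2 = r^2 + 2 * r + 1" by (simp add: power2_eq_square)
    ultimately show ?thesis using True by simp
  next
    case False
    then show ?thesis using r1 r2 by (simp add: r'_def)
  qed
  have P'D': "P' < D'"
  proof -
    have "P' < D" by (simp add: P'_def Dpos)
    then show ?thesis by (simp add: D'_def)
  qed
  have D'13: "13 \<le> D'" using D13 by (simp add: D'_def)
  have msT3': "mset (concat T3) = mset_set {p. prime p \<and> p < r'}"
    using msT3 msT2 msT1 ms newset by simp
  show ?thesis
    unfolding st' rsinv_def val_def
    using lenT3 P'D' D'13 eq4' rr' msT3' posok by simp
qed



lemma rs_iter_Suc: "rs_iter (Suc k) = snd (rs_next (rs_iter k))"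
  by (simp add: rs_iter_def)

lemma iter_inv: "rsinv (rs_iter k) \<and> mm (rs_iter k) = 100 + k"
proof (induction k)
  case 0 then show ?case using init_inv by (simp add: rs_iter_def init100)
next
  case (Suc k)
  have "mm (snd (rs_next (rs_iter k))) = mm (rs_iter k) + 1" by (simp add: rs_next_explicit)
  then show ?case using Suc step_inv by (simp add: rs_iter_Suc)
qed

lemma compr_filter: "[f x. x \<leftarrow> xs, P x] = map f (filter P xs)"
  by (induction xs) auto

lemma not_prime_100: "\<not> prime (100::nat)"
  using prime_product[of 10 10] by simp

lemma output_correct: "rs_output n = filter prime [0..<n + 1]"
proof (cases "100 \<le> n")
  case False
  then show ?thesis by (simp add: rs_output_def)
next
  case True
  have fst_eq: "fst (rs_next (rs_iter k)) = prime (100 + k)" for k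
    using step_out iter_inv by metis
  have "[100 + k. k \<leftarrow> [0..<n - 99], fst (rs_next (rs_iter k))]
        = map (\<lambda>k. 100 + k) (filter (\<lambda>k. prime (100 + k)) [0..<n - 99])"
    by (simp add: fst_eq compr_filter)
  also have "\<dots> = filter prime (map (\<lambda>k. 100 + k) [0..<n - 99])"
    by (simp add: filter_map comp_def)
  also have "map (\<lambda>k. 100 + k) [0..<n - 99] = [100..<n+1]"
    using map_add_upt[of 100 "n - 99"] True by (simp add: add.commute)
  also have "[100..<n+1] = 100 # [101..<n+1]" using True by (simp add: upt_conv_Cons)
  finally have A: "[100 + k. k \<leftarrow> [0..<n - 99], fst (rs_next (rs_iter k))] = filter prime [101..<n+1]"
    using not_prime_100 by simp
  have B: "[0..<n+1] = [0..<101] @ [101..<n+1]"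
    using True upt_add_eq_append[of 0 101 "n - 100"] by simp
  show ?thesis using True A B by (simp add: rs_output_def)
qed



lemma cost_k:
  assumes "100 + k \<le> n"
  shows "rs_next_cost (rs_iter k) \<le> 1 + card {p. prime p \<and> p \<le> n \<and> p dvd (100 + k)}"
proof -
  have I: "rsinv (rs_iter k)" and m: "mm (rs_iter k) = 100 + k" using iter_inv by auto
  have "rs_next_cost (rs_iter k) = 1 + card {p. prime p \<and> p < rr (rs_iter k) \<and> p dvd (100 + k)}"
    using step_cost[OF I] m by (simp add: rs_next_cost_def)
  also have "card {p. prime p \<and> p < rr (rs_iter k) \<and> p dvd (100 + k)} \<le> card {p. prime p \<and> p \<le> n \<and> p dvd (100 + k)}"
  proof (rule card_mono)
    show "finite {p. prime p \<and> p \<le> n \<and> p dvd (100 + k)}" by simp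
    show "{p. prime p \<and> p < rr (rs_iter k) \<and> p dvd (100 + k)} \<subseteq> {p. prime p \<and> p \<le> n \<and> p dvd (100 + k)}"
      using assms by (auto dest: dvd_imp_le)
  qed
  finally show ?thesis by simp
qed

lemma card_filter_sum: "finite A \<Longrightarrow> card {x\<in>A. Q x} = (\<Sum>x\<in>A. if Q x then 1 else 0)"
  by (simp add: sum.inter_filter[symmetric])

lemma sum_swap_card:
  assumes "finite M" "finite Q"
  shows "(\<Sum>m\<in>M. card {p\<in>Q. p dvd m}) = (\<Sum>p\<in>Q. card {m\<in>M. (p::nat) dvd m})"
proof -
  have "(\<Sum>m\<in>M. card {p\<in>Q. p dvd m}) = (\<Sum>m\<in>M. \<Sum>p\<in>Q. if p dvd m then 1 else 0)"
    using assms by (simp add: card_filter_sum)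
  also have "\<dots> = (\<Sum>p\<in>Q. \<Sum>m\<in>M. if p dvd m then 1 else 0)" by (rule sum.swap)
  also have "\<dots> = (\<Sum>p\<in>Q. card {m\<in>M. (p::nat) dvd m})"
    using assms by (simp add: card_filter_sum)
  finally show ?thesis .
qed

lemma card_multiples: "p > 0 \<Longrightarrow> card {m\<in>{1..n}. (p::nat) dvd m} \<le> n div p"
proof -
  assume p: "p > 0"
  have "{m\<in>{1..n}. p dvd m} \<subseteq> (\<lambda>i. p * i) ` {1..n div p}"
  proof
    fix m assume "m \<in> {m\<in>{1..n}. p dvd m}"
    then obtain i where i: "m = p * i" "1 \<le> m" "m \<le> n" by (auto elim: dvdE)
    then have "i \<ge> 1" by (cases i) auto
    moreover have "i \<le> n div p"
    proof -
      have "i = m div p" using i p by simp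
      then show ?thesis using i(3) div_le_mono by simp
    qed
    ultimately show "m \<in> (\<lambda>i. p * i) ` {1..n div p}" using i by auto
  qed
  then have "card {m\<in>{1..n}. p dvd m} \<le> card ((\<lambda>i. p * i) ` {1..n div p})"
    by (rule card_mono[rotated]) simp
  also have "\<dots> \<le> card {1..n div p}" by (rule card_image_le) simp
  finally show ?thesis by simp
qed

lemma init_cost_100: "rs_init_cost 100 = 18"
proof -
  have "floor_sqrt 100 = 10" using floor_sqrt_inverse_power2[of 10] by simp
  then show ?thesis by (simp add: rs_init_cost_def filt)
qed

lemma ops_bound:
  assumes n: "100 \<le> n"
  shows "real (rs_ops n) \<le> 120 + real n + real n * psum n"
proof -
  define Pn where "Pn = {p. prime p \<and> p \<le> n}"
  have finP: "finite Pn" by (simp add: Pn_def)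
  have setq: "{p. prime p \<and> p \<le> n \<and> p dvd m} = {p\<in>Pn. p dvd m}" for m by (auto simp: Pn_def)
  have "(\<Sum>k<n - 99. rs_next_cost (rs_iter k)) \<le> (\<Sum>k<n - 99. 1 + card {p\<in>Pn. p dvd (100 + k)})"
  proof (rule sum_mono)
    fix k assume "k \<in> {..<n - 99}"
    then have "100 + k \<le> n" using n by auto
    then show "rs_next_cost (rs_iter k) \<le> 1 + card {p\<in>Pn. p dvd (100 + k)}"
      using cost_k[of k n] setq[of "100+k"] by simp
  qed
  also have "\<dots> = (n - 99) + (\<Sum>k<n - 99. card {p\<in>Pn. p dvd (100 + k)})"
    by (simp only: sum.distrib) simp
  finally have s0: "(\<Sum>k<n - 99. rs_next_cost (rs_iter k)) \<le> (n - 99) + (\<Sum>k<n - 99. card {p\<in>Pn. p dvd (100 + k)})" .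
  have "(\<Sum>k<n - 99. card {p\<in>Pn. p dvd (100 + k)}) = (\<Sum>m\<in>(\<lambda>k. 100 + k) ` {..<n - 99}. card {p\<in>Pn. p dvd m})"
    by (subst sum.reindex) (auto simp: inj_on_def)
  also have "\<dots> \<le> (\<Sum>m\<in>{1..n}. card {p\<in>Pn. p dvd m})"
    by (rule sum_mono2) auto
  also have "\<dots> = (\<Sum>p\<in>Pn. card {m\<in>{1..n}. p dvd m})"
    by (rule sum_swap_card) (auto simp: finP)
  finally have s1: "(\<Sum>k<n - 99. rs_next_cost (rs_iter k)) \<le> (n - 99) + (\<Sum>p\<in>Pn. card {m\<in>{1..n}. p dvd m})"
    using s0 by linarith
  have "real (\<Sum>p\<in>Pn. card {m\<in>{1..n}. p dvd m}) = (\<Sum>p\<in>Pn. real (card {m\<in>{1..n}. p dvd m}))"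
    by simp
  also have "\<dots> \<le> (\<Sum>p\<in>Pn. real n * (1 / real p))"
  proof (rule sum_mono)
    fix p assume "p \<in> Pn"
    then have p0: "p > 0" using prime_gt_0_nat by (auto simp: Pn_def)
    have "real (card {m\<in>{1..n}. p dvd m}) \<le> real (n div p)" using card_multiples[OF p0] by simp
    also have "\<dots> \<le> real n / real p" by (rule of_nat_div_le_of_nat)
    finally show "real (card {m\<in>{1..n}. p dvd m}) \<le> real n * (1 / real p)" by simp
  qed
  also have "\<dots> = real n * psum n" by (simp add: psum_def Pn_def sum_distrib_left)
  finally have s2: "real (\<Sum>p\<in>Pn. card {m\<in>{1..n}. p dvd m}) \<le> real n * psum n" .
  have "rs_ops n = 101 + 18 + (\<Sum>k<n - 99. rs_next_cost (rs_iter k))"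
    using n by (simp add: rs_ops_def init_cost_100)
  then have "real (rs_ops n) = 119 + real (\<Sum>k<n - 99. rs_next_cost (rs_iter k))" by simp
  also have "\<dots> \<le> 119 + real (n - 99) + real (\<Sum>p\<in>Pn. card {m\<in>{1..n}. p dvd m})"
  proof -
    have "real (\<Sum>k<n - 99. rs_next_cost (rs_iter k)) \<le> real ((n - 99) + (\<Sum>p\<in>Pn. card {m\<in>{1..n}. p dvd m}))"
      using s1 by (simp only: of_nat_le_iff)
    then show ?thesis by (simp only: of_nat_add)
  qed
  also have "\<dots> \<le> 120 + real n + real n * psum n" using s2 n by simp
  finally show ?thesis .
qed


lemma ops_bigo: "(\<lambda>n. real (rs_ops n)) \<in> O(\<lambda>n. real n * ln (ln (real n)))"
proof -
  define h where "h = (\<lambda>n::nat. 120 + real n + real n * (5/2 + 2 * ln (log 2 (real n))))"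
  have "(\<lambda>n. real (rs_ops n)) \<in> O(h)"
  proof (rule bigoI[where c = 1])
    show "eventually (\<lambda>n. norm (real (rs_ops n)) \<le> 1 * norm (h n)) at_top"
      using eventually_ge_at_top[of "100::nat"]
    proof eventually_elim
      case (elim n)
      have "real (rs_ops n) \<le> 120 + real n + real n * psum n" using ops_bound[OF elim] .
      also have "real n * psum n \<le> real n * (5/2 + 2 * ln (log 2 (real n)))"
        using psum_bound[of n] elim by (intro mult_left_mono) auto
      finally have "real (rs_ops n) \<le> h n" by (simp add: h_def)
      then show ?case by simp
    qed
  qed
  also have "h \<in> O(\<lambda>n. real n * ln (ln (real n)))"
    unfolding h_def by real_asymp
  finally show ?thesis .
qed



lemma sqrt_bound:
  fixes a b :: nat
  assumes "(a - 1)^2 \<le> b" "a \<ge> 1"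
  shows "real a \<le> sqrt (real b) + 1"
proof -
  have "real (a - 1) ^2 \<le> real b" using assms(1) by (metis of_nat_le_iff of_nat_power)
  then have "real (a - 1) \<le> sqrt (real b)" by (rule real_le_rsqrt)
  then show ?thesis using assms(2) by (simp add: of_nat_diff)
qed

lemma word_bits_bound: "n \<ge> 1 \<Longrightarrow> real (word_bits n) \<le> log 2 (real n) + 1"
proof -
  assume n: "n \<ge> 1"
  have "2 ^ floor_log n \<le> n" using floor_log_exp2_le[of n] n by simp
  then have "real (2 ^ floor_log n) \<le> real n" by linarith
  then have "log 2 (2 ^ floor_log n) \<le> log 2 (real n)"
    using n by (subst log_le_cancel_iff) auto
  then have "real (floor_log n) \<le> log 2 (real n)" by simp
  then show ?thesis by (simp add: word_bits_def)
qed

lemma space_state: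
  assumes I: "rsinv st" and m: "mm st \<le> n + 1" and n: "n \<ge> 1"
  shows "real (rs_space n st) \<le> (log 2 (real n) + 1) * (4 * sqrt (real n + 1) + 10)"
proof -
  define D where "D = delta st"
  define r where "r = rr st"
  have len: "length (tab st) = D" and eq4: "4 * mm st = (D - 1)^2 + 4 * pos st + 256"
    and r1: "(r - 1)^2 \<le> mm st" and D13: "D \<ge> 13"
    and ms: "mset (concat (tab st)) = mset_set {p. prime p \<and> p < r}"
    using I by (auto simp: rsinv_def D_def r_def)
  have r2: "r \<ge> 2" using inv_facts(3)[OF I] by (simp add: r_def)
  have "sum_list (map length (tab st)) = length (concat (tab st))" by (simp add: length_concat)
  also have "\<dots> = size (mset (concat (tab st)))" by simp
  also have "\<dots> = card {p. prime p \<and> p < r}" using ms by simp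
  also have "\<dots> \<le> card {..<r}" by (rule card_mono) auto
  finally have sl: "sum_list (map length (tab st)) \<le> r" by simp
  have "(D - 1)^2 \<le> 4 * mm st" using eq4 by simp
  then have "real D \<le> sqrt (real (4 * mm st)) + 1"
    using D13 by (intro sqrt_bound) auto
  also have "sqrt (real (4 * mm st)) = 2 * sqrt (real (mm st))"
    by (simp add: real_sqrt_mult)
  finally have Db: "real D \<le> 2 * sqrt (real (mm st)) + 1" .
  have rb: "real r \<le> sqrt (real (mm st)) + 1" using r1 r2 by (intro sqrt_bound) auto
  have sq: "sqrt (real (mm st)) \<le> sqrt (real n + 1)" using m by simp
  have "real (length (tab st) + 2 * sum_list (map length (tab st)) + 7) \<le> real D + 2 * real r + 7"
    using len sl by simp
  also have "\<dots> \<le> 4 * sqrt (real n + 1) + 10" using Db rb sq by linarith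
  finally have A: "real (length (tab st) + 2 * sum_list (map length (tab st)) + 7) \<le> 4 * sqrt (real n + 1) + 10" .
  have B: "real (word_bits n) \<le> log 2 (real n) + 1" using word_bits_bound n by simp
  have "real (rs_space n st) = real (word_bits n) * real (length (tab st) + 2 * sum_list (map length (tab st)) + 7)"
    by (simp add: rs_space_def)
  also have "\<dots> \<le> (log 2 (real n) + 1) * (4 * sqrt (real n + 1) + 10)"
    using A B by (intro mult_mono) auto
  finally show ?thesis .
qed

lemma peak_bound:
  assumes n: "n \<ge> 100"
  shows "real (rs_peak_space n) \<le> (log 2 (real n) + 1) * (4 * sqrt (real n + 1) + 10)"
proof -
  have eq: "{rs_space n (rs_iter k) | k. k \<le> n - 99} = (\<lambda>k. rs_space n (rs_iter k)) ` {..n - 99}"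
    by auto
  have "Max ((\<lambda>k. rs_space n (rs_iter k)) ` {..n - 99}) \<in> (\<lambda>k. rs_space n (rs_iter k)) ` {..n - 99}"
    by (rule Max_in) auto
  then obtain k where k0: "k \<in> {..n - 99}" "Max ((\<lambda>k. rs_space n (rs_iter k)) ` {..n - 99}) = rs_space n (rs_iter k)"
    by blast
  have "rs_peak_space n = Max ((\<lambda>k. rs_space n (rs_iter k)) ` {..n - 99})"
    using n by (simp add: rs_peak_space_def eq)
  then have k: "k \<le> n - 99" "rs_peak_space n = rs_space n (rs_iter k)" using k0 by auto
  have "mm (rs_iter k) \<le> n + 1" using iter_inv[of k] k n by simp
  then show ?thesis using k space_state iter_inv n by simp
qed

lemma space_bigo: "(\<lambda>n. real (rs_peak_space n)) \<in> O(\<lambda>n. sqrt (real n) * ln (real n))"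
proof -
  define h where "h = (\<lambda>n::nat. (log 2 (real n) + 1) * (4 * sqrt (real n + 1) + 10))"
  have "(\<lambda>n. real (rs_peak_space n)) \<in> O(h)"
  proof (rule bigoI[where c = 1])
    show "eventually (\<lambda>n. norm (real (rs_peak_space n)) \<le> 1 * norm (h n)) at_top"
      using eventually_ge_at_top[of "100::nat"]
    proof eventually_elim
      case (elim n)
      then have "real (rs_peak_space n) \<le> h n" using peak_bound by (simp add: h_def)
      then show ?case by simp
    qed
  qed
  also have "h \<in> O(\<lambda>n. sqrt (real n) * ln (real n))"
    unfolding h_def by real_asymp
  finally show ?thesis .
qed


theorem theorem2:
  shows "(\<forall>n. rs_output n = filter prime [0..<n + 1]) \<and>
         (\<lambda>n. real (rs_ops n)) \<in> O(\<lambda>n. real n * ln (ln (real n))) \<and>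
         (\<lambda>n. real (rs_peak_space n)) \<in> O(\<lambda>n. sqrt (real n) * ln (real n))"
  using output_correct ops_bigo space_bigo by blast

end
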